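(* Let $\varepsilon>0$ be fixed, let $d$ be a sufficiently large constant (depending on $\varepsilon$), and let $q\ge(2+\varepsilon)d$ and $0\le\beta<1$ be constants. Let $G=(V,E)\sim\mathcal{G}(n,d/n)$. There exists a constant $C>0$ such that with probability $1-O(1/n)$, for every $\ell\ge0$ and every path $P$ in $G$ with $\ell$ edges, $|B(P)|\le C(\ell+\log n)$.
   Context: $\mathcal{G}(n,p)$ is the Erdős–Rényi random graph on $n$ vertices with each edge present independently with probability $p$. A vertex $u$ of $G$ is low-degree if $\deg_G(u)<\frac{q-1}{1-\beta}-2$, high-degree otherwise. For $B\subseteq V$, $\partial B=\{u\in V\setminus B:\exists w\in B,uw\in E\}$. A set $B\subseteq V$ is a permissive block if every vertex of $\partial B$ is low-degree; $B(P)$ denotes the minimal permissive block containing the vertex set of $P$. *)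

theory Defs
  imports "HOL-Probability.Probability"
begin

text \<open>Graphs on vertex set V = {..<n}; the edge set E is a set of pairs (i,j) with i < j < n
  (each unordered edge stored once).\<close>

definition pairs :: "nat \<Rightarrow> (nat \<times> nat) set" where
  "pairs n = {(i, j). i < j \<and> j < n}"

definition erdos_renyi :: "nat \<Rightarrow> real \<Rightarrow> (nat \<times> nat) set pmf" where
  "erdos_renyi n p =
     map_pmf (\<lambda>f. {e \<in> pairs n. f e}) (Pi_pmf (pairs n) False (\<lambda>_. bernoulli_pmf p))"

definition adj :: "(nat \<times> nat) set \<Rightarrow> nat \<Rightarrow> nat \<Rightarrow> bool" where
  "adj E u v \<longleftrightarrow> (u, v) \<in> E \<or> (v, u) \<in> E"

definition degree :: "nat \<Rightarrow> (nat \<times> nat) set \<Rightarrow> nat \<Rightarrow> nat" where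
  "degree n E u = card {v \<in> {..<n}. adj E u v}"

definition low_degree :: "nat \<Rightarrow> (nat \<times> nat) set \<Rightarrow> real \<Rightarrow> real \<Rightarrow> nat \<Rightarrow> bool" where
  "low_degree n E q \<beta> u \<longleftrightarrow> real (degree n E u) < (q - 1) / (1 - \<beta>) - 2"

definition boundary :: "nat \<Rightarrow> (nat \<times> nat) set \<Rightarrow> nat set \<Rightarrow> nat set" where
  "boundary n E B = {u \<in> {..<n} - B. \<exists>w\<in>B. adj E u w}"

definition permissive_block :: "nat \<Rightarrow> (nat \<times> nat) set \<Rightarrow> real \<Rightarrow> real \<Rightarrow> nat set \<Rightarrow> bool" where
  "permissive_block n E q \<beta> B \<longleftrightarrow>
     B \<subseteq> {..<n} \<and> (\<forall>u \<in> boundary n E B. low_degree n E q \<beta> u)"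

text \<open>The minimal permissive block containing S (permissive blocks are closed under
  intersection and {..<n} is one, so this is the unique minimal one).\<close>
definition min_block :: "nat \<Rightarrow> (nat \<times> nat) set \<Rightarrow> real \<Rightarrow> real \<Rightarrow> nat set \<Rightarrow> nat set" where
  "min_block n E q \<beta> S = \<Inter> {B. permissive_block n E q \<beta> B \<and> S \<subseteq> B}"

text \<open>A path with \<ell> edges: a list of \<ell>+1 distinct vertices, consecutive ones adjacent.\<close>
definition is_path :: "nat \<Rightarrow> (nat \<times> nat) set \<Rightarrow> nat list \<Rightarrow> bool" where
  "is_path n E P \<longleftrightarrow> P \<noteq> [] \<and> distinct P \<and> set P \<subseteq> {..<n} \<and>
     (\<forall>i. Suc i < length P \<longrightarrow> adj E (P ! i) (P ! Suc i))"

end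

theory Submission
  imports Defs
begin

inductive conn :: "nat \<Rightarrow> (nat\<times>nat) set \<Rightarrow> nat set \<Rightarrow> bool" for n E where
  single: "v < n \<Longrightarrow> conn n E {v}"
| grow: "conn n E A \<Longrightarrow> w \<in> A \<Longrightarrow> adj E v w \<Longrightarrow> v \<notin> A \<Longrightarrow> v < n \<Longrightarrow> conn n E (insert v A)"

definition tedges :: "(nat \<Rightarrow> nat) \<Rightarrow> nat set \<Rightarrow> (nat\<times>nat) set" where
  "tedges f B = (\<lambda>u. (min u (f u), max u (f u))) ` {u\<in>B. f u \<noteq> u}"

lemma conn_props: "conn n E A \<Longrightarrow> finite A \<and> A \<subseteq> {..<n} \<and> A \<noteq> {}"
  by (induction rule: conn.induct) auto

lemma adj_sym: "adj E u v = adj E v u" by (auto simp: adj_def)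

lemma adj_edge: "E \<subseteq> pairs n \<Longrightarrow> adj E v w \<Longrightarrow> (min v w, max v w) \<in> E"
  by (auto simp: adj_def pairs_def min_def max_def)

lemma conn_tree:
  assumes "conn n E A" "E \<subseteq> pairs n"
  shows "\<exists>f \<in> A \<rightarrow>\<^sub>E A. card (tedges f A) = card A - 1 \<and> tedges f A \<subseteq> E"
  using assms(1)
proof (induction rule: conn.induct)
  case (single v)
  show ?case
    by (rule bexI[of _ "restrict (\<lambda>_. v) {v}"]) (auto simp: tedges_def)
next
  case (grow A w v)
  then obtain f where f: "f \<in> A \<rightarrow>\<^sub>E A" "card (tedges f A) = card A - 1" "tedges f A \<subseteq> E" by blast
  have fin: "finite A" "A \<noteq> {}" using conn_props[OF grow(1)] by auto
  define g where "g = f(v := w)"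
  have vw: "v \<noteq> w" using grow by auto
  have g: "g \<in> insert v A \<rightarrow>\<^sub>E insert v A" using f(1) grow(2,4) unfolding g_def by (auto simp: PiE_def extensional_def)
  have "{u \<in> insert v A. g u \<noteq> u} = insert v {u\<in>A. f u \<noteq> u}"
    using vw grow(4) by (auto simp: g_def)
  moreover have "\<And>u. u \<in> A \<Longrightarrow> g u = f u" using grow(4) by (auto simp: g_def)
  ultimately have te: "tedges g (insert v A) = insert (min v w, max v w) (tedges f A)"
    unfolding tedges_def using vw by (auto simp: g_def image_iff)
  have nin: "(min v w, max v w) \<notin> tedges f A"
  proof
    assume "(min v w, max v w) \<in> tedges f A"
    then obtain u where u: "u \<in> A" "min v w = min u (f u)" "max v w = max u (f u)"
      by (auto simp: tedges_def)
    have "f u \<in> A" using u(1) f(1) by auto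
    then have "min v w \<in> A" "max v w \<in> A" using u by (auto simp: min_def max_def split: if_splits)
    then show False using grow(4) by (auto simp: min_def max_def split: if_splits)
  qed
  have ft: "finite (tedges f A)" using fin unfolding tedges_def by auto
  have "card (tedges g (insert v A)) = card (insert v A) - 1"
    using te nin ft f(2) fin grow(4) by (simp add: card_insert_if) (metis Suc_pred card_gt_0_iff)
  moreover have "tedges g (insert v A) \<subseteq> E" using te f(3) adj_edge[OF assms(2) grow(3)] by auto
  ultimately show ?case using g by blast
qed

lemma closure_exists:
  assumes "conn n E A"
  shows "\<exists>R. conn n E R \<and> A \<subseteq> R \<and> permissive_block n E q \<beta> R \<and> (\<forall>u\<in>R-A. \<not> low_degree n E q \<beta> u)"
  using assms
proof (induction "n - card A" arbitrary: A rule: less_induct)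
  case less
  have A: "finite A" "A \<subseteq> {..<n}" using conn_props[OF less(2)] by auto
  show ?case
  proof (cases "permissive_block n E q \<beta> A")
    case True
    then show ?thesis using less(2) by blast
  next
    case False
    then obtain u where u: "u \<in> boundary n E A" "\<not> low_degree n E q \<beta> u"
      using A unfolding permissive_block_def by auto
    then obtain w where w: "w \<in> A" "adj E u w" "u < n" "u \<notin> A" unfolding boundary_def by auto
    have c: "conn n E (insert u A)" using conn.grow[OF less(2) w(1,2) w(4) w(3)] .
    have "card (insert u A) \<le> n"
      using A w by (metis card_lessThan card_mono finite_lessThan insert_subset lessThan_iff)
    moreover have "card (insert u A) = Suc (card A)" using A w by simp
    ultimately have "n - card (insert u A) < n - card A" by linarith
    from less(1)[OF this c] obtain R where R: "conn n E R" "insert u A \<subseteq> R"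
      "permissive_block n E q \<beta> R" "\<forall>x\<in>R - insert u A. \<not> low_degree n E q \<beta> x" by blast
    then show ?thesis using u(2) by (intro exI[of _ R]) auto
  qed
qed

lemma min_block_le:
  assumes "permissive_block n E q \<beta> R" "S \<subseteq> R"
  shows "min_block n E q \<beta> S \<subseteq> R"
  using assms unfolding min_block_def by auto

lemma path_conn:
  assumes "is_path n E P"
  shows "conn n E (set P)"
proof -
  have P: "P \<noteq> []" "distinct P" "set P \<subseteq> {..<n}" "\<And>i. Suc i < length P \<Longrightarrow> adj E (P ! i) (P ! Suc i)"
    using assms unfolding is_path_def by auto
  have "k < length P \<Longrightarrow> conn n E (set (take (Suc k) P))" for k
  proof (induction k)
    case 0
    have "set (take (Suc 0) P) = {P ! 0}" using P(1) by (cases P) auto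
    moreover have "P ! 0 < n" using P(1,3) by (meson lessThan_iff nth_mem subsetD 0)
    ultimately show ?case by (simp add: conn.single)
  next
    case (Suc k)
    have eq: "take (Suc (Suc k)) P = take (Suc k) P @ [P ! Suc k]" using Suc(2) by (simp add: take_Suc_conv_app_nth)
    have w: "P ! k \<in> set (take (Suc k) P)" using Suc(2) by (simp add: take_Suc_conv_app_nth)
    have a: "adj E (P ! Suc k) (P ! k)" using P(4)[of k] Suc(2) adj_sym by metis
    have nin: "P ! Suc k \<notin> set (take (Suc k) P)"
    proof
      assume "P ! Suc k \<in> set (take (Suc k) P)"
      moreover have "P ! Suc k \<in> set (drop (Suc k) P)" using Suc(2)
        by (metis Cons_nth_drop_Suc list.set_intros(1))
      ultimately show False using P(2) set_take_disj_set_drop_if_distinct by fastforce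
    qed
    have "P ! Suc k < n" using P(3) Suc(2) nth_mem by blast
    then show ?case using conn.grow[OF Suc.IH[OF _] w a nin] Suc(2) eq by simp
  qed
  from this[of "length P - 1"] P(1) show ?thesis by simp
qed

definition touch :: "(nat\<times>nat) set \<Rightarrow> nat set \<Rightarrow> (nat\<times>nat) set" where
  "touch E R = {e\<in>E. fst e \<in> R \<or> snd e \<in> R}"

lemma degree_le: "finite E \<Longrightarrow> degree n E u \<le> card {e\<in>E. fst e = u} + card {e\<in>E. snd e = u}"
proof -
  assume fE: "finite E"
  have "{v\<in>{..<n}. adj E u v} \<subseteq> snd ` {e\<in>E. fst e = u} \<union> fst ` {e\<in>E. snd e = u}"
    by (auto simp: adj_def image_iff)
  then have "degree n E u \<le> card (snd ` {e\<in>E. fst e = u} \<union> fst ` {e\<in>E. snd e = u})"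
    unfolding degree_def using fE by (intro card_mono) auto
  also have "\<dots> \<le> card (snd ` {e\<in>E. fst e = u}) + card (fst ` {e\<in>E. snd e = u})" by (rule card_Un_le)
  also have "\<dots> \<le> card {e\<in>E. fst e = u} + card {e\<in>E. snd e = u}"
    using fE by (intro add_mono card_image_le) auto
  finally show ?thesis .
qed

lemma sum_fibres: "finite E \<Longrightarrow> finite R \<Longrightarrow> (\<Sum>u\<in>R. card {e\<in>E. g e = u}) = card {e\<in>E. g e \<in> R}"
proof -
  assume f: "finite E" "finite R"
  have "{e\<in>E. g e \<in> R} = (\<Union>u\<in>R. {e\<in>E. g e = u})" by auto
  then show ?thesis using f by (simp add: card_UN_disjoint disjoint_iff)
qed

lemma degree_sum:
  assumes "finite E" "finite R"
  shows "(\<Sum>u\<in>R. degree n E u) \<le> 2 * card (touch E R)"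
proof -
  have "(\<Sum>u\<in>R. degree n E u) \<le> (\<Sum>u\<in>R. card {e\<in>E. fst e = u} + card {e\<in>E. snd e = u})"
    by (intro sum_mono degree_le assms)
  also have "\<dots> = card {e\<in>E. fst e \<in> R} + card {e\<in>E. snd e \<in> R}"
    using assms by (simp add: sum.distrib sum_fibres)
  also have "\<dots> \<le> card (touch E R) + card (touch E R)"
    unfolding touch_def using assms by (intro add_mono card_mono) auto
  finally show ?thesis by simp
qed

lemma finite_pairs: "finite (pairs n)"
proof -
  have "pairs n \<subseteq> {..<n} \<times> {..<n}" by (auto simp: pairs_def)
  then show ?thesis by (rule finite_subset) auto
qed

lemma ER_mgf:
  assumes T: "T \<subseteq> pairs n" and D: "D \<subseteq> pairs n" and TD: "T \<inter> D = {}"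
    and p: "0 \<le> p" "p \<le> 1" and t: "0 \<le> t"
  shows "measure_pmf.prob (erdos_renyi n p) {E. T \<subseteq> E \<and> \<kappa> \<le> real (card (E \<inter> D))}
         \<le> p ^ card T * exp (real (card D) * p * (exp t - 1) - t * \<kappa>)"
proof -
  define M where "M = Pi_pmf (pairs n) False (\<lambda>_. bernoulli_pmf p)"
  define h where "h = (\<lambda>f. {e \<in> pairs n. f e})"
  define A where "A = h -` {E. T \<subseteq> E \<and> \<kappa> \<le> real (card (E \<inter> D))}"
  define g where "g = (\<lambda>e (b::bool). if e \<in> T then (if b then 1 else 0::real)
                       else if e \<in> D then exp (t * (if b then 1 else 0)) else 1)"
  have fT: "finite T" "finite D" using T D finite_pairs finite_subset by blast+
  have finM: "finite (set_pmf M)"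
  proof -
    have "set_pmf M = PiE_dflt (pairs n) False (set_pmf \<circ> (\<lambda>_. bernoulli_pmf p))"
      unfolding M_def by (rule set_Pi_pmf[OF finite_pairs])
    also have "finite \<dots>" by (intro finite_PiE_dflt finite_pairs) auto
    finally show ?thesis .
  qed
  have prod_split: "(\<Prod>e\<in>pairs n. g e (f e)) =
        (\<Prod>e\<in>T. g e (f e)) * (\<Prod>e\<in>D. g e (f e))" for f
  proof -
    have eq: "T \<union> D \<union> (pairs n - (T \<union> D)) = pairs n" using T D by auto
    have "(\<Prod>e\<in>pairs n. g e (f e)) = (\<Prod>e\<in>T \<union> D \<union> (pairs n - (T \<union> D)). g e (f e))" by (simp only: eq)
    also have "\<dots> = (\<Prod>e\<in>T \<union> D. g e (f e)) * (\<Prod>e\<in>pairs n - (T \<union> D). g e (f e))"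
      by (intro prod.union_disjoint) (use fT finite_pairs in auto)
    also have "(\<Prod>e\<in>pairs n - (T \<union> D). g e (f e)) = 1" by (intro prod.neutral) (auto simp: g_def)
    also have "(\<Prod>e\<in>T \<union> D. g e (f e)) = (\<Prod>e\<in>T. g e (f e)) * (\<Prod>e\<in>D. g e (f e))"
      by (intro prod.union_disjoint) (use fT TD in auto)
    finally show ?thesis by simp
  qed
  have ind: "indicator A f \<le> exp (- t * \<kappa>) * (\<Prod>e\<in>pairs n. g e (f e))" for f
  proof (cases "f \<in> A")
    case True
    have hf: "h f \<inter> D = {e\<in>D. f e}" using D by (auto simp: h_def)
    have a0: "T \<subseteq> h f" "\<kappa> \<le> real (card (h f \<inter> D))" using True by (auto simp: A_def)
    have a: "\<forall>e\<in>T. f e" "\<kappa> \<le> real (card {e\<in>D. f e})"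
      using a0 hf by (auto simp: h_def)
    have "(\<Prod>e\<in>T. g e (f e)) = 1" using a(1) by (intro prod.neutral) (auto simp: g_def)
    moreover have "(\<Prod>e\<in>D. g e (f e)) = (\<Prod>e\<in>D. exp (t * (if f e then 1 else 0)))"
      using TD by (intro prod.cong) (auto simp: g_def)
    moreover have "\<dots> = exp (\<Sum>e\<in>D. t * (if f e then 1 else 0))" by (simp add: exp_sum fT)
    moreover have "(\<Sum>e\<in>D. t * (if f e then 1 else 0)) = t * real (card {e\<in>D. f e})"
      by (simp add: sum_distrib_left[symmetric] sum.If_cases fT Int_def conj_commute)
    ultimately have "(\<Prod>e\<in>pairs n. g e (f e)) = exp (t * real (card {e\<in>D. f e}))"
      using prod_split by simp
    moreover have "exp (t * \<kappa>) \<le> exp (t * real (card {e\<in>D. f e}))"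
      using a(2) t by (simp add: mult_left_mono)
    ultimately show ?thesis using True by (simp add: exp_minus field_simps)
  next
    case False
    have "0 \<le> (\<Prod>e\<in>pairs n. g e (f e))" by (intro prod_nonneg) (auto simp: g_def)
    then show ?thesis using False by simp
  qed
  have "measure_pmf.prob (erdos_renyi n p) {E. T \<subseteq> E \<and> \<kappa> \<le> real (card (E \<inter> D))}
        = measure_pmf.prob M A"
    unfolding erdos_renyi_def M_def A_def h_def by simp
  also have "\<dots> = measure_pmf.expectation M (indicator A)" by simp
  also have "\<dots> \<le> measure_pmf.expectation M (\<lambda>f. exp (- t * \<kappa>) * (\<Prod>e\<in>pairs n. g e (f e)))"
    by (intro integral_mono integrable_measure_pmf_finite finM ind)
  also have "\<dots> = exp (- t * \<kappa>) * measure_pmf.expectation M (\<lambda>f. \<Prod>e\<in>pairs n. g e (f e))"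
    by simp
  also have "measure_pmf.expectation M (\<lambda>f. \<Prod>e\<in>pairs n. g e (f e))
       = (\<Prod>e\<in>pairs n. measure_pmf.expectation (bernoulli_pmf p) (g e))"
    unfolding M_def
    by (intro expectation_prod_Pi_pmf finite_pairs integrable_measure_pmf_finite) (auto simp: g_def)
  also have "\<dots> = (\<Prod>e\<in>pairs n. (if e \<in> T then p else if e \<in> D then 1 + p * (exp t - 1) else 1))"
    using p by (intro prod.cong) (auto simp: g_def algebra_simps)
  also have "\<dots> = p ^ card T * (1 + p * (exp t - 1)) ^ card D"
  proof -
    have eq: "T \<union> D \<union> (pairs n - (T \<union> D)) = pairs n" using T D by auto
    have "(\<Prod>e\<in>pairs n. (if e \<in> T then p else if e \<in> D then 1 + p * (exp t - 1) else 1))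
       = (\<Prod>e\<in>T \<union> D \<union> (pairs n - (T \<union> D)). (if e \<in> T then p else if e \<in> D then 1 + p * (exp t - 1) else 1))"
      by (simp only: eq)
    also have "\<dots> = (\<Prod>e\<in>T. (if e \<in> T then p else if e \<in> D then 1 + p * (exp t - 1) else 1))
       * (\<Prod>e\<in>D. (if e \<in> T then p else if e \<in> D then 1 + p * (exp t - 1) else 1))
       * (\<Prod>e\<in>pairs n - (T \<union> D). (if e \<in> T then p else if e \<in> D then 1 + p * (exp t - 1) else 1))"
      using fT TD finite_pairs by (simp only: prod.union_disjoint finite_Diff finite_Un Int_Diff Diff_disjoint Int_Un_distrib2 Int_empty_left Un_empty)
    also have "(\<Prod>e\<in>T. (if e \<in> T then p else if e \<in> D then 1 + p * (exp t - 1) else 1)) = (\<Prod>e\<in>T. p)"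
      by (intro prod.cong) auto
    also have "(\<Prod>e\<in>D. (if e \<in> T then p else if e \<in> D then 1 + p * (exp t - 1) else 1)) = (\<Prod>e\<in>D. 1 + p * (exp t - 1))"
      using TD by (intro prod.cong) auto
    also have "(\<Prod>e\<in>pairs n - (T \<union> D). (if e \<in> T then p else if e \<in> D then 1 + p * (exp t - 1) else 1)) = 1"
      by (intro prod.neutral) auto
    also have "(\<Prod>e\<in>T. p) * (\<Prod>e\<in>D. 1 + p * (exp t - 1)) * 1 = p ^ card T * (1 + p * (exp t - 1)) ^ card D"
      by simp
    finally show ?thesis .
  qed
  finally have "measure_pmf.prob (erdos_renyi n p) {E. T \<subseteq> E \<and> \<kappa> \<le> real (card (E \<inter> D))}
        \<le> exp (- t * \<kappa>) * (p ^ card T * (1 + p * (exp t - 1)) ^ card D)" by simp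
  moreover have "(1 + p * (exp t - 1)) ^ card D \<le> exp (p * (exp t - 1)) ^ card D"
    using p t by (intro power_mono) (auto simp: exp_ge_add_one_self)
  moreover have "exp (p * (exp t - 1)) ^ card D = exp (real (card D) * p * (exp t - 1))"
    by (simp add: exp_of_nat_mult[symmetric] mult.assoc)
  ultimately have "measure_pmf.prob (erdos_renyi n p) {E. T \<subseteq> E \<and> \<kappa> \<le> real (card (E \<inter> D))}
        \<le> exp (- t * \<kappa>) * (p ^ card T * exp (real (card D) * p * (exp t - 1)))"
    using p by (smt (verit) exp_ge_zero mult_left_mono zero_le_power)
  also have "\<dots> = p ^ card T * exp (real (card D) * p * (exp t - 1) - t * \<kappa>)"
    unfolding diff_conv_add_uminus exp_add by (simp add: mult_ac)
  finally show ?thesis .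
qed

lemma pow_le_exp_fact: "real m ^ m \<le> exp (real m) * fact m"
proof -
  have "(\<Sum>k\<le>m. real m ^ k / fact k) \<le> exp (real m)"
    using summable_exp_generic[of "real m"]
    by (auto simp: exp_def divide_inverse ac_simps intro!: sum_le_suminf)
  moreover have "real m ^ m / fact m \<le> (\<Sum>k\<le>m. real m ^ k / fact k)"
    by (rule member_le_sum) auto
  ultimately have "real m ^ m / fact m \<le> exp (real m)" by linarith
  then show ?thesis by (simp add: divide_le_eq)
qed

lemma count_bound:
  assumes m: "1 \<le> m" "m \<le> n" and d: "1 \<le> d"
  shows "real (n choose m) * real m ^ m * (d / n) ^ (m - 1) * exp (- (m * c))
         \<le> n * (exp 1 * d * exp (- c)) ^ m"
proof -
  have n: "real n \<ge> 1" using m by simp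
  have a: "real (n choose m) * fact m \<le> real n ^ m"
    using binomial_fact_pow[of n m] by (metis of_nat_fact of_nat_le_iff of_nat_mult of_nat_power)
  have b: "real (n choose m) * real m ^ m \<le> real n ^ m * exp m"
  proof -
    have "real (n choose m) * real m ^ m \<le> real (n choose m) * (exp (real m) * fact m)"
      by (intro mult_left_mono pow_le_exp_fact) auto
    also have "\<dots> = (real (n choose m) * fact m) * exp m" by simp
    also have "\<dots> \<le> real n ^ m * exp m" by (intro mult_right_mono a) auto
    finally show ?thesis .
  qed
  have c: "(d / n) ^ (m - 1) = d ^ (m - 1) / real n ^ (m - 1)" by (simp add: power_divide)
  have e: "real n ^ m = real n * real n ^ (m - 1)" using m by (metis Suc_diff_le diff_Suc_1 power_Suc)
  have f: "d ^ (m - 1) \<le> d ^ m" using d by (intro power_increasing) auto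
  have "real (n choose m) * real m ^ m * (d / n) ^ (m - 1) * exp (- (m * c))
       \<le> real n ^ m * exp m * (d / n) ^ (m - 1) * exp (- (m * c))"
    by (intro mult_right_mono b) (use d in auto)
  also have "\<dots> = real n * exp m * d ^ (m - 1) * exp (- (m * c))"
    using n by (simp add: c e field_simps)
  also have "\<dots> \<le> real n * exp m * d ^ m * exp (- (m * c))"
    by (intro mult_right_mono mult_left_mono f) (use n in auto)
  also have "\<dots> = n * (exp 1 * d * exp (- c)) ^ m"
    by (simp add: power_mult_distrib exp_of_nat_mult[symmetric])
  finally show ?thesis .
qed

definition TP :: "nat \<Rightarrow> nat set \<Rightarrow> (nat \<times> nat) set" where
  "TP n B = {e \<in> pairs n. fst e \<in> B \<or> snd e \<in> B}"

lemma card_TP: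
  assumes "finite B"
  shows "card (TP n B) \<le> card B * n"
proof -
  have "TP n B \<subseteq> (\<Union>u\<in>B. (\<lambda>v. (min u v, max u v)) ` {..<n})"
  proof (rule subsetI)
    fix e assume "e \<in> TP n B"
    then obtain i j where e: "e = (i,j)" "i < j" "j < n" "i \<in> B \<or> j \<in> B"
      by (auto simp: TP_def pairs_def)
    show "e \<in> (\<Union>u\<in>B. (\<lambda>v. (min u v, max u v)) ` {..<n})"
    proof (cases "i \<in> B")
      case True
      have "e = (min i j, max i j)" using e by simp
      then show ?thesis using True e by blast
    next
      case False
      have "e = (min j i, max j i)" using e by simp
      moreover have "i < n" using e by simp
      ultimately show ?thesis using False e by blast
    qed
  qed
  then have "card (TP n B) \<le> card (\<Union>u\<in>B. (\<lambda>v. (min u v, max u v)) ` {..<n})"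
    using assms by (intro card_mono) auto
  also have "\<dots> \<le> (\<Sum>u\<in>B. card ((\<lambda>v. (min u v, max u v)) ` {..<n}))"
    by (rule card_UN_le) (rule assms)
  also have "\<dots> \<le> (\<Sum>u\<in>B. n)"
    by (intro sum_mono) (metis card_image_le card_lessThan finite_lessThan)
  finally show ?thesis by simp
qed

lemma tedges_sub:
  assumes "f \<in> B \<rightarrow>\<^sub>E B" "B \<subseteq> {..<n}"
  shows "tedges f B \<subseteq> TP n B"
proof
  fix e assume "e \<in> tedges f B"
  then obtain u where u: "u \<in> B" "f u \<noteq> u" "e = (min u (f u), max u (f u))"
    unfolding tedges_def by blast
  have "f u \<in> B" using assms(1) u(1) by auto
  then have "u < n" "f u < n" using assms(2) u(1) by auto
  then show "e \<in> TP n B" using u unfolding TP_def pairs_def by (auto simp: min_def max_def)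
qed

lemma union_bound:
  assumes "finite I"
  shows "measure_pmf.prob M (\<Union>i\<in>I. A i) \<le> (\<Sum>i\<in>I. measure_pmf.prob M (A i))"
  using assms by (intro measure_pmf.finite_measure_subadditive_finite) auto

lemma ln_ge_1: "3 \<le> n \<Longrightarrow> 1 \<le> ln (real n)"
proof -
  assume "3 \<le> n"
  then have "exp 1 \<le> real n" using exp_le by linarith
  moreover have "0 < n" using \<open>3 \<le> n\<close> by simp
  ultimately show ?thesis using ln_le_cancel_iff[of "exp 1" "real n"] by simp
qed

lemma bad_witness:
  assumes E: "E \<subseteq> pairs n" and n: "3 \<le> n" and P: "is_path n E P" and C: "1 \<le> C"
    and Th: "\<And>u. \<not> low_degree n E q \<beta> u \<Longrightarrow> Th \<le> real (degree n E u)" and Th0: "0 \<le> Th"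
    and big: "C * (real (length P - 1) + ln (real n)) < real (card (min_block n E q \<beta> (set P)))"
  shows "\<exists>B f. B \<subseteq> {..<n} \<and> card B \<le> n \<and> C * ln n < card B \<and> f \<in> B \<rightarrow>\<^sub>E B \<and>
     card (tedges f B) = card B - 1 \<and> tedges f B \<subseteq> E \<and>
     (1 - 1/C) * card B * Th / 2 - card B \<le> real (card (E \<inter> (TP n B - tedges f B)))"
proof -
  have finE: "finite E" using E finite_pairs finite_subset by blast
  obtain R where R: "conn n E R" "set P \<subseteq> R" "permissive_block n E q \<beta> R"
      "\<forall>u\<in>R - set P. \<not> low_degree n E q \<beta> u"
    using closure_exists[OF path_conn[OF P]] by blast
  have Rp: "finite R" "R \<subseteq> {..<n}" "R \<noteq> {}" using conn_props[OF R(1)] by auto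
  have cardR: "card R \<le> n" using Rp by (metis card_lessThan card_mono finite_lessThan)
  have "min_block n E q \<beta> (set P) \<subseteq> R" by (rule min_block_le[OF R(3,2)])
  then have mb: "card (min_block n E q \<beta> (set P)) \<le> card R" using Rp card_mono by blast
  define m where "m = card R"
  define L where "L = length P"
  have Pd: "distinct P" "P \<noteq> []" using P unfolding is_path_def by auto
  have cP: "card (set P) = L" using Pd distinct_card L_def by blast
  have L1: "1 \<le> L" using Pd L_def by (cases P) auto
  have ln1: "1 \<le> ln (real n)" using ln_ge_1 n by blast
  have mbr: "C * (real (L - 1) + ln (real n)) < real m"
    using big mb unfolding L_def m_def by (meson of_nat_le_iff less_le_trans)
  have "real L \<le> real (L - 1) + ln (real n)" using L1 ln1 by linarith
  then have "C * real L \<le> C * (real (L - 1) + ln (real n))" using C by (intro mult_left_mono) auto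
  then have CL: "C * real L < m" using mbr by linarith
  have "C * ln n \<le> C * (real (L - 1) + ln (real n))" using C by (intro mult_left_mono) auto
  then have Cln: "C * ln n < m" using mbr by linarith
  define H where "H = R - set P"
  have cH: "real (card H) = real m - real L" unfolding H_def m_def
    using card_Diff_subset[OF _ R(2)] cP card_mono[OF Rp(1) R(2)] by (simp add: of_nat_diff)
  have "real L \<le> real m / C" using CL C by (simp add: field_simps)
  then have cH2: "(1 - 1/C) * real m \<le> real (card H)" using cH by (simp add: algebra_simps)
  have "real (card H) * Th = (\<Sum>u\<in>H. Th)" by simp
  also have "\<dots> \<le> (\<Sum>u\<in>H. real (degree n E u))"
    by (intro sum_mono Th) (use R(4) H_def in auto)
  also have "\<dots> \<le> (\<Sum>u\<in>R. real (degree n E u))"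
    by (intro sum_mono2 Rp) (auto simp: H_def)
  also have "\<dots> \<le> 2 * real (card (touch E R))"
    using degree_sum[OF finE Rp(1), of n] by (metis of_nat_le_iff of_nat_mult of_nat_numeral of_nat_sum)
  finally have deg: "real (card H) * Th \<le> 2 * real (card (touch E R))" .
  obtain f where f: "f \<in> R \<rightarrow>\<^sub>E R" "card (tedges f R) = card R - 1" "tedges f R \<subseteq> E"
    using conn_tree[OF R(1) E] by blast
  have tsub: "tedges f R \<subseteq> touch E R"
    using f(3) tedges_sub[OF f(1) Rp(2)] unfolding touch_def TP_def by auto
  have "E \<inter> (TP n R - tedges f R) = touch E R - tedges f R"
    using E unfolding touch_def TP_def by auto
  then have "card (E \<inter> (TP n R - tedges f R)) = card (touch E R) - card (tedges f R)"
    using card_Diff_subset[OF _ tsub] finE unfolding touch_def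
    by (metis (no_types, lifting) finite_subset mem_Collect_eq subsetI touch_def tsub)
  then have "real (card (E \<inter> (TP n R - tedges f R))) = real (card (touch E R)) - real (card (tedges f R))"
    using card_mono[OF _ tsub] finE unfolding touch_def by (simp add: of_nat_diff)
  moreover have "real (card (tedges f R)) \<le> real m" using f(2) m_def by simp
  moreover have "(1 - 1/C) * real m * Th \<le> real (card H) * Th" using cH2 Th0 by (intro mult_right_mono) auto
  ultimately have *: "(1 - 1/C) * m * Th / 2 - m \<le> real (card (E \<inter> (TP n R - tedges f R)))"
    if "\<And>X. X \<le> real (card H) * Th \<Longrightarrow> X / 2 - m \<le> real (card (E \<inter> (TP n R - tedges f R)))"
    using that by blast
  have "(1 - 1/C) * m * Th / 2 - m \<le> real (card (E \<inter> (TP n R - tedges f R)))"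
  proof (rule *)
    fix X assume "X \<le> real (card H) * Th"
    then show "X / 2 - m \<le> real (card (E \<inter> (TP n R - tedges f R)))"
      using deg \<open>real (card (E \<inter> (TP n R - tedges f R))) = real (card (touch E R)) - real (card (tedges f R))\<close>
        \<open>real (card (tedges f R)) \<le> real m\<close> by linarith
  qed
  then show ?thesis using Rp cardR Cln f unfolding m_def by blast
qed

lemma main_n:
  fixes a d q \<beta> :: real and n :: nat
  assumes a: "0 < a" "a \<le> 1" and d: "32 / a \<le> d" "1 \<le> d" "2 + ln d \<le> d * a^2 / 256"
    and q: "(2 + a) * d \<le> q" and \<beta>: "0 \<le> \<beta>" "\<beta> < 1" and n: "3 \<le> n" "d \<le> real n"
  shows "1 - 1 / real n \<le> measure_pmf.prob (erdos_renyi n (d / real n))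
           {E. \<forall>P. is_path n E P \<longrightarrow> real (card (min_block n E q \<beta> (set P)))
                 \<le> (4 / a + 3) * (real (length P - 1) + ln (real n))}"
proof -
  define C where "C = 4 / a + 3"
  define p where "p = d / real n"
  define Th where "Th = (2 + a) * d - 3"
  define c where "c = d * a^2 / 256"
  define Gd where "Gd = {E. \<forall>P. is_path n E P \<longrightarrow> real (card (min_block n E q \<beta> (set P)))
                 \<le> C * (real (length P - 1) + ln (real n))}"
  define Ev where "Ev = (\<lambda>m B f. {E. tedges f B \<subseteq> E \<and>
      (1 + a/8) * d * real m \<le> real (card (E \<inter> (TP n B - tedges f B)))})"
  define Ms where "Ms = {m. m \<le> n \<and> C * ln (real n) < real m}"
  define Bs where "Bs = (\<lambda>m. {B. B \<subseteq> {..<n} \<and> card B = m})"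
  define Fs where "Fs = (\<lambda>B. {f \<in> B \<rightarrow>\<^sub>E B. card (tedges f B) = card B - 1})"
  define ER where "ER = erdos_renyi n p"
  have n0: "0 < real n" using n by simp
  have p: "0 \<le> p" "p \<le> 1" using d n n0 by (auto simp: p_def divide_le_eq)
  have C3: "3 \<le> C" using a by (simp add: C_def)
  have ln1: "1 \<le> ln (real n)" by (rule ln_ge_1[OF n(1)])
  have d32: "32 \<le> d"
  proof -
    have "32 \<le> 32 / a" using a by (simp add: le_divide_eq)
    then show ?thesis using d(1) by linarith
  qed
  have C1: "1 \<le> C" using C3 by linarith
  have ad2: "2 * d \<le> (2 + a) * d" using a d32 by (intro mult_right_mono) auto
  have q2d: "2 * d \<le> q" using ad2 q by linarith
  have Th2d: "2 * d - 3 \<le> Th" using ad2 unfolding Th_def by linarith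
  have brk: "(1 + a/8) * d \<le> (1 - 1/C) * Th / 2 - 1"
  proof -
    have C': "1 - 1/C = (4 + 2*a) / (4 + 3*a)" using a by (simp add: C_def field_simps)
    have ad: "32 \<le> a * d" using d(1) a by (simp add: divide_le_eq mult.commute)
    have "(4 + 3*a) * ((1 + a/8) * d + 1) \<le> (2 + a) * ((2 + a) * d - 3)"
    proof -
      have "(2 + a) * ((2 + a) * d - 3) - (4 + 3*a) * ((1 + a/8) * d + 1)
          = a * d / 2 + 5 * a * (a * d) / 8 - 10 - 6 * a" by (simp add: algebra_simps power2_eq_square)
      moreover have "0 \<le> 5 * a * (a * d) / 8" using a ad by simp
      ultimately show ?thesis using ad a by linarith
    qed
    then have "(1 + a/8) * d + 1 \<le> (2 + a) * ((2 + a) * d - 3) / (4 + 3*a)"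
      using a by (simp add: le_divide_eq mult.commute)
    also have "\<dots> = (1 - 1/C) * Th / 2" unfolding C' Th_def using a by (simp add: field_simps)
    finally show ?thesis by linarith
  qed
  have supp: "E \<subseteq> pairs n" if "E \<in> set_pmf ER" for E
    using that unfolding ER_def erdos_renyi_def by auto
  have incl: "(UNIV - Gd) \<inter> set_pmf ER \<subseteq> (\<Union>m\<in>Ms. \<Union>B\<in>Bs m. \<Union>f\<in>Fs B. Ev m B f)"
  proof
    fix E assume E: "E \<in> (UNIV - Gd) \<inter> set_pmf ER"
    then have Ep: "E \<subseteq> pairs n" using supp by blast
    from E obtain P where P: "is_path n E P"
        "C * (real (length P - 1) + ln (real n)) < real (card (min_block n E q \<beta> (set P)))"
      unfolding Gd_def by (auto simp: not_le)
    have Thd: "Th \<le> real (degree n E u)" if "\<not> low_degree n E q \<beta> u" for u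
    proof -
      have 1: "(q - 1) / (1 - \<beta>) - 2 \<le> real (degree n E u)"
        using that by (simp add: low_degree_def not_less)
      have q1: "0 \<le> q - 1" using q2d d32 by linarith
      have "(q - 1) * (1 - \<beta>) \<le> q - 1" using \<beta> q1 by (intro mult_left_le) auto
      then have "q - 1 \<le> (q - 1) / (1 - \<beta>)" using \<beta> by (simp add: le_divide_eq)
      moreover have "Th \<le> q - 3" using q by (simp add: Th_def)
      ultimately show ?thesis using 1 by linarith
    qed
    have Th0: "0 \<le> Th" using d32 Th2d by linarith
    obtain B f where Bf: "B \<subseteq> {..<n}" "card B \<le> n" "C * ln n < card B" "f \<in> B \<rightarrow>\<^sub>E B"
        "card (tedges f B) = card B - 1" "tedges f B \<subseteq> E"
        "(1 - 1/C) * card B * Th / 2 - card B \<le> real (card (E \<inter> (TP n B - tedges f B)))"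
      using bad_witness[OF Ep n(1) P(1) C1 Thd Th0 P(2)] by blast
    have "(1 + a/8) * d * real (card B) \<le> ((1 - 1/C) * Th / 2 - 1) * real (card B)"
      using brk by (intro mult_right_mono) auto
    then have "(1 + a/8) * d * real (card B) \<le> (1 - 1/C) * card B * Th / 2 - card B"
      by (simp add: algebra_simps)
    then have "E \<in> Ev (card B) B f" using Bf unfolding Ev_def by auto
    moreover have "card B \<in> Ms" using Bf unfolding Ms_def by auto
    moreover have "B \<in> Bs (card B)" using Bf unfolding Bs_def by auto
    moreover have "f \<in> Fs B" using Bf unfolding Fs_def by auto
    ultimately show "E \<in> (\<Union>m\<in>Ms. \<Union>B\<in>Bs m. \<Union>f\<in>Fs B. Ev m B f)" by blast
  qed
  have evb: "measure_pmf.prob ER (Ev m B f) \<le> p ^ (m - 1) * exp (- (m * c))"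
    if "B \<in> Bs m" "f \<in> Fs B" for m B f
  proof -
    have B: "B \<subseteq> {..<n}" "card B = m" "finite B" using that(1) unfolding Bs_def
      by (auto intro: finite_subset)
    have f: "f \<in> B \<rightarrow>\<^sub>E B" "card (tedges f B) = m - 1" using that(2) B unfolding Fs_def by auto
    have T: "tedges f B \<subseteq> pairs n" using tedges_sub[OF f(1) B(1)] unfolding TP_def by auto
    have D: "TP n B - tedges f B \<subseteq> pairs n" unfolding TP_def by auto
    define t where "t = a / 16"
    have t: "0 \<le> t" "t \<le> 1" using a by (auto simp: t_def)
    define De where "De = TP n B - tedges f B"
    have "measure_pmf.prob ER (Ev m B f) \<le> p ^ card (tedges f B) *
        exp (real (card De) * p * (exp t - 1) - t * ((1 + a/8) * d * real m))"
      unfolding ER_def Ev_def De_def by (rule ER_mgf[OF T D _ p t(1)]) auto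
    also have "\<dots> \<le> p ^ (m - 1) * exp (- (m * c))"
    proof -
      have cD: "real (card De) * p \<le> real m * d"
      proof -
        have "card De \<le> card (TP n B)" unfolding De_def
          by (intro card_mono) (auto simp: TP_def intro: finite_subset[OF _ finite_pairs])
        also have "\<dots> \<le> m * n" using card_TP[OF B(3)] B(2) by simp
        finally have "real (card De) \<le> real m * real n" by (simp flip: of_nat_mult)
        then have "real (card De) * p \<le> real m * real n * p" using p by (intro mult_right_mono) auto
        also have "real m * real n * p = real m * d" using n0 by (simp add: p_def)
        finally show ?thesis .
      qed
      have et: "0 \<le> exp t - 1" using t by simp
      have eb: "exp t - 1 \<le> t + t^2" using exp_bound[OF t] by simp
      have "real (card De) * p * (exp t - 1) \<le> real m * d * (t + t^2)"
        using mult_mono[OF cD eb _ et] d by auto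
      then have "real (card De) * p * (exp t - 1) - t * ((1 + a/8) * d * real m)
           \<le> real m * d * (t + t^2) - t * ((1 + a/8) * d * real m)" by linarith
      also have "\<dots> = - (m * c)" by (simp add: t_def c_def power2_eq_square field_simps)
      finally have "exp (real (card De) * p * (exp t - 1) - t * ((1 + a/8) * d * real m)) \<le> exp (- (m * c))"
        by simp
      then show ?thesis unfolding f(2) using p by (intro mult_left_mono) auto
    qed
    finally show ?thesis .
  qed
  have finMs: "finite Ms" unfolding Ms_def by (rule finite_subset[of _ "{..n}"]) auto
  have finBs: "finite (Bs m)" for m unfolding Bs_def
    by (rule finite_subset[of _ "Pow {..<n}"]) auto
  have finFs: "finite (Fs B)" if "B \<in> Bs m" for m B
  proof -
    have "finite B" using that unfolding Bs_def by (auto intro: finite_subset)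
    then show ?thesis unfolding Fs_def by (intro finite_subset[OF _ finite_PiE[of B "\<lambda>_. B"]]) auto
  qed
  have cFs: "card (Fs B) \<le> m ^ m" if "B \<in> Bs m" for m B
  proof -
    have B: "finite B" "card B = m" using that unfolding Bs_def by (auto intro: finite_subset)
    have "card (Fs B) \<le> card (B \<rightarrow>\<^sub>E B)" unfolding Fs_def
      by (intro card_mono finite_PiE B) auto
    also have "\<dots> = m ^ m" using B by (simp add: card_PiE)
    finally show ?thesis .
  qed
  have cBs: "card (Bs m) = n choose m" for m
    unfolding Bs_def using n_subsets[of "{..<n}" m] by simp
  have perm: "(\<Sum>B\<in>Bs m. \<Sum>f\<in>Fs B. measure_pmf.prob ER (Ev m B f)) \<le> real n * exp (- real m)"
    if "m \<in> Ms" for m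
  proof -
    have m: "1 \<le> m" "m \<le> n"
    proof -
      have "0 < C * ln (real n)" using C3 ln1 by simp
      then show "1 \<le> m" using that unfolding Ms_def by simp
      show "m \<le> n" using that unfolding Ms_def by simp
    qed
    have "(\<Sum>B\<in>Bs m. \<Sum>f\<in>Fs B. measure_pmf.prob ER (Ev m B f))
        \<le> (\<Sum>B\<in>Bs m. \<Sum>f\<in>Fs B. p ^ (m - 1) * exp (- (m * c)))"
      by (intro sum_mono evb) auto
    also have "\<dots> = (\<Sum>B\<in>Bs m. real (card (Fs B)) * (p ^ (m - 1) * exp (- (m * c))))" by simp
    also have "\<dots> \<le> (\<Sum>B\<in>Bs m. real m ^ m * (p ^ (m - 1) * exp (- (m * c))))"
      using p cFs by (intro sum_mono mult_right_mono) (auto simp flip: of_nat_power)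
    also have "\<dots> = real (n choose m) * real m ^ m * (d / n) ^ (m - 1) * exp (- (m * c))"
      by (simp add: cBs p_def)
    also have "\<dots> \<le> n * (exp 1 * d * exp (- c)) ^ m" by (rule count_bound[OF m d(2)])
    also have "\<dots> \<le> n * exp (- 1) ^ m"
    proof -
      have "exp 1 * d * exp (- c) = exp (1 + ln d - c)"
        using d(2) by (simp add: exp_add exp_diff exp_minus field_simps)
      also have "\<dots> \<le> exp (- 1)" using d(3) by (simp add: c_def)
      finally show ?thesis using d(2) by (intro mult_left_mono power_mono) auto
    qed
    also have "\<dots> = real n * exp (- real m)" by (simp add: exp_of_nat_mult[symmetric])
    finally show ?thesis .
  qed
  have perm2: "real n * exp (- real m) \<le> 1 / real n ^ 2" if "m \<in> Ms" for m
  proof -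
    have "3 * ln (real n) \<le> C * ln (real n)" using C3 ln1 by (intro mult_right_mono) auto
    then have "3 * ln (real n) < real m" using that unfolding Ms_def by simp
    then have "exp (- real m) \<le> exp (- (3 * ln (real n)))" by simp
    also have "exp (- (3 * ln (real n))) = 1 / real n ^ 3"
    proof -
      have "exp (3 * ln (real n)) = real n ^ 3"
        using exp_of_nat_mult[of 3 "ln (real n)"] n0 by simp
      then show ?thesis by (simp add: exp_minus divide_inverse)
    qed
    finally have "real n * exp (- real m) \<le> real n * (1 / real n ^ 3)" using n0
      by (intro mult_left_mono) auto
    also have "\<dots> = 1 / real n ^ 2" using n0 by (simp add: power3_eq_cube power2_eq_square)
    finally show ?thesis .
  qed
  have cMs: "card Ms \<le> n"
  proof -
    have "Ms \<subseteq> {1..n}"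
    proof
      fix m assume "m \<in> Ms"
      moreover have "0 < C * ln (real n)" using C3 ln1 by simp
      ultimately show "m \<in> {1..n}" unfolding Ms_def by auto
    qed
    then show ?thesis by (metis card_atLeastAtMost card_mono diff_Suc_1 finite_atLeastAtMost)
  qed
  have "measure_pmf.prob ER (UNIV - Gd) = measure_pmf.prob ER ((UNIV - Gd) \<inter> set_pmf ER)"
    by (simp add: measure_Int_set_pmf)
  also have "\<dots> \<le> measure_pmf.prob ER (\<Union>m\<in>Ms. \<Union>B\<in>Bs m. \<Union>f\<in>Fs B. Ev m B f)"
    by (intro measure_pmf.finite_measure_mono incl) auto
  also have "\<dots> \<le> (\<Sum>m\<in>Ms. measure_pmf.prob ER (\<Union>B\<in>Bs m. \<Union>f\<in>Fs B. Ev m B f))"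
    by (rule union_bound[OF finMs])
  also have "\<dots> \<le> (\<Sum>m\<in>Ms. \<Sum>B\<in>Bs m. measure_pmf.prob ER (\<Union>f\<in>Fs B. Ev m B f))"
    by (intro sum_mono union_bound finBs)
  also have "\<dots> \<le> (\<Sum>m\<in>Ms. \<Sum>B\<in>Bs m. \<Sum>f\<in>Fs B. measure_pmf.prob ER (Ev m B f))"
    by (intro sum_mono union_bound finFs) auto
  also have "\<dots> \<le> (\<Sum>m\<in>Ms. 1 / real n ^ 2)"
    by (intro sum_mono order.trans[OF perm perm2])
  also have "\<dots> = real (card Ms) / real n ^ 2" by simp
  also have "\<dots> \<le> real n / real n ^ 2" using cMs n0 by (intro divide_right_mono) auto
  also have "\<dots> = 1 / real n" using n0 by (simp add: power2_eq_square)
  finally have bad: "measure_pmf.prob ER (UNIV - Gd) \<le> 1 / real n" .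
  have "measure_pmf.prob ER (UNIV - Gd) = 1 - measure_pmf.prob ER Gd"
    using measure_pmf.prob_compl[of Gd ER] by simp
  then show ?thesis using bad unfolding ER_def Gd_def C_def p_def by linarith
qed

lemma d0_facts:
  fixes a d :: real
  assumes a: "0 < a" "a \<le> 1" and d: "(1024 / a^2)^2 \<le> d"
  shows "32 / a \<le> d" "1 \<le> d" "2 + ln d \<le> d * a^2 / 256"
proof -
  define x where "x = 1024 / a^2"
  have a2: "0 < a^2" "a^2 \<le> 1" using a by (auto simp: power_le_one)
  have x1: "1024 \<le> x" unfolding x_def using a2 by (simp add: le_divide_eq)
  have xx: "x \<le> x^2" using x1 by (simp add: power2_eq_square)
  have ax: "32 / a \<le> x" unfolding x_def using a
    by (simp add: divide_le_eq le_divide_eq power2_eq_square)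
  have dx: "x^2 \<le> d" using d by (simp add: x_def)
  then show "32 / a \<le> d" using xx ax by linarith
  show d1: "1 \<le> d" using x1 xx dx by linarith
  define s where "s = sqrt d"
  have ds: "d = s * s" using d1 by (simp add: s_def)
  have sx: "x \<le> s" unfolding s_def using d x1 by (metis real_le_rsqrt x_def)
  have s1: "1 \<le> s" using sx x1 by linarith
  have l0: "ln d = 2 * ln s" using ds s1 by (simp add: ln_mult)
  have "ln s \<le> s - 1" using s1 ln_le_minus_one[of s] by simp
  then have l: "2 + ln d \<le> 2 * s" using l0 by linarith
  have "s * a^2 \<ge> 1024" using sx unfolding x_def using a2 by (simp add: divide_le_eq)
  then have "4 * s \<le> s * (s * a^2) / 256" using s1 by (simp add: le_divide_eq)
  also have "\<dots> = d * a^2 / 256" using ds by simp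
  finally show "2 + ln d \<le> d * a^2 / 256" using l s1 by linarith
qed

theorem mainTheorem15:
  fixes \<epsilon> :: real
  assumes "\<epsilon> > 0"
  shows "\<exists>d0. \<forall>d \<ge> d0. \<forall>(q::real) (\<beta>::real).
           q \<ge> (2 + \<epsilon>) * d \<and> 0 \<le> \<beta> \<and> \<beta> < 1 \<longrightarrow>
           (\<exists>C > 0. \<exists>K. \<forall>\<^sub>F n in sequentially.
              measure_pmf.prob (erdos_renyi n (d / real n))
                {E. \<forall>P. is_path n E P \<longrightarrow>
                      real (card (min_block n E q \<beta> (set P)))
                        \<le> C * (real (length P - 1) + ln (real n))}
              \<ge> 1 - K / real n)"
proof -
  define a where "a = min \<epsilon> 1"
  have a: "0 < a" "a \<le> 1" "a \<le> \<epsilon>" using assms by (auto simp: a_def)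
  show ?thesis
  proof (rule exI[of _ "(1024 / a^2)^2"], intro allI impI)
    fix d q \<beta> :: real
    assume d: "(1024 / a^2)^2 \<le> d" and qb: "(2 + \<epsilon>) * d \<le> q \<and> 0 \<le> \<beta> \<and> \<beta> < 1"
    note df = d0_facts[OF a(1,2) d]
    have q: "(2 + a) * d \<le> q"
    proof -
      have "(2 + a) * d \<le> (2 + \<epsilon>) * d" using a df(2) by (intro mult_right_mono) auto
      then show ?thesis using qb by linarith
    qed
    have pos: "0 < 4 / a + 3"
    proof -
      have "0 < 4 / a" using a by simp
      then show "0 < 4 / a + 3" by linarith
    qed
    have ev: "\<forall>\<^sub>F n in sequentially.
              measure_pmf.prob (erdos_renyi n (d / real n))
                {E. \<forall>P. is_path n E P \<longrightarrow>
                      real (card (min_block n E q \<beta> (set P)))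
                        \<le> (4 / a + 3) * (real (length P - 1) + ln (real n))}
              \<ge> 1 - 1 / real n"
      proof (rule eventually_mono[OF eventually_ge_at_top[of "max 3 (nat \<lceil>d\<rceil>)"]])
        fix n :: nat assume elim: "max 3 (nat \<lceil>d\<rceil>) \<le> n"
        have n3: "3 \<le> n" using elim by simp
        have dn: "d \<le> real n" using elim by linarith
        show "measure_pmf.prob (erdos_renyi n (d / real n))
                {E. \<forall>P. is_path n E P \<longrightarrow>
                      real (card (min_block n E q \<beta> (set P)))
                        \<le> (4 / a + 3) * (real (length P - 1) + ln (real n))}
              \<ge> 1 - 1 / real n"
          using main_n[OF a(1,2) df q _ _ n3 dn] qb by blast
      qed
    show "\<exists>C>0. \<exists>K. \<forall>\<^sub>F n in sequentially.
              measure_pmf.prob (erdos_renyi n (d / real n))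
                {E. \<forall>P. is_path n E P \<longrightarrow>
                      real (card (min_block n E q \<beta> (set P)))
                        \<le> C * (real (length P - 1) + ln (real n))}
              \<ge> 1 - K / real n"
      using pos ev by blast
  qed
qed

end
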